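(* Every graph $G=(V,E)$ on $n\ge2$ vertices can be decomposed into an edge-disjoint union of subgraphs $G_1\uplus G_2\uplus\cdots\uplus G_\ell$ such that (a) each vertex appears in at most $O(\log n)$ of the subgraphs, and (b) each subgraph $G_i$ is $2$-uniformly-dense.
   Context: A graph $H=(U,F)$ with $n_H=|U|$ vertices and $m_H=|F|$ edges is $\alpha$-uniformly-dense if (i) the minimum degree of $H$ is at least $1/\alpha$ times its average degree $2m_H/n_H$, and (ii) for every nonempty $S\subseteq U$, the average degree $2|F(S,S)|/|S|$ of the subgraph induced by $S$ is at most $\alpha$ times $2m_H/n_H$. Here $F(S,S)$ is the set of edges with both endpoints in $S$. *)

theory Defs
  imports Complex_Main
begin

definition simple_graph :: "'a set \<Rightarrow> 'a set set \<Rightarrow> bool" where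
  "simple_graph V E \<longleftrightarrow> finite V \<and> (\<forall>e\<in>E. e \<subseteq> V \<and> card e = 2)"

definition degree :: "'a set set \<Rightarrow> 'a \<Rightarrow> nat" where
  "degree F v = card {e \<in> F. v \<in> e}"

definition avg_degree :: "'a set \<Rightarrow> 'a set set \<Rightarrow> real" where
  "avg_degree U F = 2 * real (card F) / real (card U)"

definition induced_edges :: "'a set set \<Rightarrow> 'a set \<Rightarrow> 'a set set" where
  "induced_edges F S = {e \<in> F. e \<subseteq> S}"

definition uniformly_dense :: "real \<Rightarrow> 'a set \<Rightarrow> 'a set set \<Rightarrow> bool" where
  "uniformly_dense \<alpha> U F \<longleftrightarrow>
     (\<forall>v\<in>U. real (degree F v) \<ge> avg_degree U F / \<alpha>) \<and>
     (\<forall>S. S \<subseteq> U \<and> S \<noteq> {} \<longrightarrow>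
        2 * real (card (induced_edges F S)) / real (card S) \<le> \<alpha> * avg_degree U F)"

end

theory Submission
  imports Defs "HOL-Library.FuncSet"
begin

definition outd :: "nat set set \<Rightarrow> (nat set \<Rightarrow> nat) \<Rightarrow> nat \<Rightarrow> nat" where
  "outd E g v = card {e\<in>E. g e = v}"

definition arcs :: "nat set set \<Rightarrow> (nat set \<Rightarrow> nat) \<Rightarrow> (nat \<times> nat) set" where
  "arcs E g = {(u,w). {u,w} \<in> E \<and> g {u,w} = u \<and> u \<noteq> w}"

definition Phi :: "nat set \<Rightarrow> nat set set \<Rightarrow> (nat set \<Rightarrow> nat) \<Rightarrow> nat" where
  "Phi V E g = (\<Sum>v\<in>V. (outd E g v)^2)"

lemma relpow_mono_set: "(R::('a\<times>'a) set) \<subseteq> S \<Longrightarrow> R ^^ n \<subseteq> S ^^ n"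
  by (induction n) (simp_all add: relcomp_mono)

lemma relpow_avoid:
  "(a,z) \<in> (R::('a\<times>'a) set) ^^ m \<Longrightarrow> (a,z) \<in> (R - {(x,y)}) ^^ m \<or> (\<exists>j\<le>m. (a,y) \<in> R ^^ j)"
proof (induction m arbitrary: z)
  case 0
  then show ?case by simp
next
  case (Suc m)
  from Suc.prems obtain w where w: "(a,w) \<in> R ^^ m" "(w,z) \<in> R" by (rule relpow_Suc_E)
  from Suc.IH[OF w(1)] show ?case
  proof
    assume h: "(a, w) \<in> (R - {(x, y)}) ^^ m"
    show ?thesis
    proof (cases "(w,z) = (x,y)")
      case True
      then have "(a,y) \<in> R ^^ Suc m" using relpow_mono_set[of "R - {(x,y)}" R m] h w(2) by auto
      then show ?thesis by blast
    next
      case False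
      then show ?thesis using h w(2) by auto
    qed
  next
    assume "\<exists>j\<le>m. (a, y) \<in> R ^^ j"
    then show ?thesis using le_SucI by blast
  qed
qed

locale gr =
  fixes V :: "nat set" and E :: "nat set set" and M :: nat
  assumes finV: "finite V" and edges: "\<And>e. e \<in> E \<Longrightarrow> e \<subseteq> V \<and> card e = 2"
begin

definition H where "H = {g \<in> Pi\<^sub>E E (\<lambda>e. e). \<forall>v. outd E g v \<le> M}"

lemma finE: "finite E"
  using finV edges by (meson Pow_iff finite_Pow_iff rev_finite_subset subsetI)

lemma fin_out: "finite {e\<in>E. P e}" using finE by simp

lemma finH: "finite H"
proof -
  have "finite (Pi\<^sub>E E (\<lambda>e. e))"
    using finE edges by (intro finite_PiE) (auto intro: finite_subset[OF _ finV])
  then show ?thesis unfolding H_def by simp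
qed

lemma edge_other: assumes "e \<in> E" "u \<in> e" obtains w where "e = {u,w}" "u \<noteq> w"
proof -
  from edges[OF assms(1)] have "card e = 2" by simp
  then obtain a b where "e = {a,b}" "a \<noteq> b" by (auto simp: card_Suc_eq numeral_2_eq_2)
  then show ?thesis using that assms(2) by (auto simp: insert_commute)
qed


lemma sum_two: assumes "x \<in> V" "y \<in> V" "x \<noteq> y"
  shows "(\<Sum>v\<in>V. f v) = f x + f y + (\<Sum>v\<in>V-{x,y}. f v)"
proof -
  have "(\<Sum>v\<in>V. f v) = f x + (\<Sum>v\<in>V-{x}. f v)" using sum.remove[OF finV assms(1)] .
  also have "(\<Sum>v\<in>V-{x}. f v) = f y + (\<Sum>v\<in>V-{x}-{y}. f v)"
    using sum.remove[of "V-{x}" y] finV assms by auto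
  also have "V-{x}-{y} = V-{x,y}" by auto
  finally show ?thesis by (simp add: add.assoc)
qed

lemma out_upd:
  assumes g: "\<forall>e\<in>E. g e \<in> e" and xy: "(x,y) \<in> arcs E g"
  shows "outd E (g({x,y} := y)) x = outd E g x - 1"
    "outd E (g({x,y} := y)) y = Suc (outd E g y)"
    "\<And>v. v \<noteq> x \<Longrightarrow> v \<noteq> y \<Longrightarrow> outd E (g({x,y} := y)) v = outd E g v"
    "outd E g x \<ge> 1"
proof -
  from xy have e0: "{x,y} \<in> E" "g {x,y} = x" "x \<noteq> y" by (auto simp: arcs_def)
  have "{e\<in>E. (g({x,y} := y)) e = x} = {e\<in>E. g e = x} - {{x,y}}" using e0 by auto
  then show "outd E (g({x,y} := y)) x = outd E g x - 1"
    unfolding outd_def using e0 by (simp add: card_Diff_singleton fin_out)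
  have "{e\<in>E. (g({x,y} := y)) e = y} = insert {x,y} {e\<in>E. g e = y}" using e0 by auto
  moreover have "{x,y} \<notin> {e\<in>E. g e = y}" using e0 by auto
  ultimately show "outd E (g({x,y} := y)) y = Suc (outd E g y)"
    unfolding outd_def by (simp add: fin_out)
  show "\<And>v. v \<noteq> x \<Longrightarrow> v \<noteq> y \<Longrightarrow> outd E (g({x,y} := y)) v = outd E g v"
  proof -
    fix v assume "v \<noteq> x" "v \<noteq> y"
    then have "{e\<in>E. (g({x,y} := y)) e = v} = {e\<in>E. g e = v}" using e0 by auto
    then show "outd E (g({x,y} := y)) v = outd E g v" unfolding outd_def by simp
  qed
  have "{x,y} \<in> {e\<in>E. g e = x}" using e0 by auto
  then show "outd E g x \<ge> 1" unfolding outd_def using fin_out[of "\<lambda>e. g e = x"] card_gt_0_iff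
    by (metis (no_types, lifting) One_nat_def Suc_leI empty_iff)
qed

lemma opt_arc:
  assumes gH: "g \<in> H" and opt: "\<forall>g'\<in>H. Phi V E g \<le> Phi V E g'" and xy: "(x,y) \<in> arcs E g"
  shows "outd E g x \<le> Suc (outd E g y)"
    "outd E g x = Suc (outd E g y) \<Longrightarrow> g({x,y}:=y) \<in> H \<and> (\<forall>g''\<in>H. Phi V E (g({x,y}:=y)) \<le> Phi V E g'')"
proof -
  from xy have e0: "{x,y} \<in> E" "g {x,y} = x" "x \<noteq> y" by (auto simp: arcs_def)
  have xyV: "x \<in> V" "y \<in> V" using edges[OF e0(1)] by auto
  have g: "\<forall>e\<in>E. g e \<in> e" using gH unfolding H_def by auto
  note u = out_upd[OF g xy]
  define g' where "g' = g({x,y}:=y)"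
  let ?a = "outd E g x" and ?b = "outd E g y"
  have key: "?b + 1 \<le> ?a \<Longrightarrow> g' \<in> H \<and> Phi V E g' + 2 * ?a = Phi V E g + 2 * ?b + 2"
  proof -
    assume ab: "?b + 1 \<le> ?a"
    have "g' \<in> Pi\<^sub>E E (\<lambda>e. e)" using gH e0 unfolding H_def g'_def by (auto simp: PiE_def extensional_def)
    moreover have "\<forall>v. outd E g' v \<le> M"
    proof
      fix v
      have bM: "\<forall>v. outd E g v \<le> M" using gH unfolding H_def by auto
      show "outd E g' v \<le> M"
        using u bM[rule_format, of v] bM[rule_format, of x] ab unfolding g'_def
        by (cases "v = x"; cases "v = y") auto
    qed
    ultimately have "g' \<in> H" unfolding H_def by auto
    have S: "(\<Sum>v\<in>V-{x,y}. (outd E g' v)^2) = (\<Sum>v\<in>V-{x,y}. (outd E g v)^2)"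
      using u(3) unfolding g'_def by (intro sum.cong) auto
    have "Phi V E g' = (outd E g' x)^2 + (outd E g' y)^2 + (\<Sum>v\<in>V-{x,y}. (outd E g' v)^2)"
      unfolding Phi_def using sum_two[OF xyV e0(3), of "\<lambda>v. (outd E g' v)^2"] by simp
    moreover have "Phi V E g = ?a^2 + ?b^2 + (\<Sum>v\<in>V-{x,y}. (outd E g v)^2)"
      unfolding Phi_def using sum_two[OF xyV e0(3), of "\<lambda>v. (outd E g v)^2"] by simp
    moreover have "outd E g' x = ?a - 1" "outd E g' y = Suc ?b" using u unfolding g'_def by auto
    ultimately have "Phi V E g' + 2 * ?a = Phi V E g + 2 * ?b + 2"
      using S u(4) by (cases ?a) (auto simp: power2_eq_square algebra_simps)
    with \<open>g' \<in> H\<close> show ?thesis by simp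
  qed
  show "?a \<le> Suc ?b"
  proof (rule ccontr)
    assume "\<not> ?a \<le> Suc ?b"
    then have "?b + 1 \<le> ?a" by simp
    from key[OF this] opt show False using \<open>\<not> ?a \<le> Suc ?b\<close> by fastforce
  qed
  assume eq: "?a = Suc ?b"
  from key eq have "g' \<in> H" "Phi V E g' = Phi V E g" by auto
  then show "g({x,y}:=y) \<in> H \<and> (\<forall>g''\<in>H. Phi V E (g({x,y}:=y)) \<le> Phi V E g'')"
    using opt unfolding g'_def by auto
qed


lemma path_bound:
  assumes "g \<in> H" "\<forall>g'\<in>H. Phi V E g \<le> Phi V E g'" "(a,y) \<in> (arcs E g)^^m"
    "k \<le> outd E g a" "outd E g y + 2 \<le> k"
  shows False
using assms
proof (induction m arbitrary: g y rule: less_induct)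
  case (less m)
  show False
  proof (cases m)
    case 0
    then show ?thesis using less.prems by auto
  next
    case (Suc m')
    from less.prems(3) obtain z where z: "(a,z) \<in> arcs E g ^^ m'" "(z,y) \<in> arcs E g"
      unfolding Suc by (auto elim: relpow_Suc_E)
    show False
    proof (cases "outd E g z + 2 \<le> k")
      case True
      then show ?thesis using less.IH[of m' g z] less.prems z Suc by auto
    next
      case False
      have oz: "outd E g z \<le> Suc (outd E g y)" using opt_arc(1)[OF less.prems(1,2) z(2)] .
      then have eq: "outd E g z = Suc (outd E g y)" using False less.prems(5) by linarith
      define g' where "g' = g({z,y}:=y)"
      have g'opt: "g' \<in> H" "\<forall>g''\<in>H. Phi V E g' \<le> Phi V E g''"
        using opt_arc(2)[OF less.prems(1,2) z(2) eq] g'_def by auto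
      have gfun: "\<forall>e\<in>E. g e \<in> e" using less.prems(1) unfolding H_def by auto
      note u = out_upd[OF gfun z(2)]
      have az: "a \<noteq> z" "a \<noteq> y" using less.prems(4,5) eq by auto
      have oa: "outd E g' a = outd E g a" using u(3) az g'_def by auto
      have oz': "outd E g' z + 2 \<le> k" using u(1) eq less.prems(5) g'_def by auto
      from relpow_avoid[OF z(1), of z y]
      show False
      proof
        assume h: "(a,z) \<in> (arcs E g - {(z,y)})^^m'"
        have "arcs E g - {(z,y)} \<subseteq> arcs E g'"
        proof
          fix p assume p: "p \<in> arcs E g - {(z,y)}"
          obtain u w where pw: "p = (u,w)" by (cases p)
          have zy: "g {z,y} = z" using z(2) by (auto simp: arcs_def)
          from p pw have uw: "{u,w} \<in> E" "g {u,w} = u" "u \<noteq> w" "(u,w) \<noteq> (z,y)" by (auto simp: arcs_def)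
          have "{u,w} \<noteq> {z,y}"
          proof
            assume "{u,w} = {z,y}"
            then have "u = z" using uw zy by metis
            then show False using uw \<open>{u,w} = {z,y}\<close> by (auto simp: doubleton_eq_iff)
          qed
          then show "p \<in> arcs E g'" using uw pw unfolding g'_def arcs_def by auto
        qed
        then have "(a,z) \<in> arcs E g' ^^ m'" using h relpow_mono_set by blast
        then show False using less.IH[of m' g' z] g'opt oa oz' less.prems(4) Suc by auto
      next
        assume "\<exists>j\<le>m'. (a,y) \<in> arcs E g ^^ j"
        then obtain j where "j \<le> m'" "(a,y) \<in> arcs E g ^^ j" by blast
        then show False using less.IH[of j g y] less.prems Suc by auto
      qed
    qed
  qed
qed


lemma handshake:
  assumes "\<forall>e\<in>P. e \<subseteq> X \<and> card e = 2" "finite X" "finite P"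
  shows "(\<Sum>v\<in>X. degree P v) = 2 * card P"
proof -
  have "(\<Sum>v\<in>X. degree P v) = (\<Sum>v\<in>X. \<Sum>e\<in>P. if v \<in> e then 1 else 0)"
    unfolding degree_def using assms(3) by (simp add: sum.inter_filter[symmetric])
  also have "\<dots> = (\<Sum>e\<in>P. \<Sum>v\<in>X. if v \<in> e then 1 else 0)" by (rule sum.swap)
  also have "\<dots> = (\<Sum>e\<in>P. card {v\<in>X. v \<in> e})"
    using assms(2) by (simp add: sum.inter_filter[symmetric])
  also have "\<dots> = (\<Sum>e\<in>P. 2)"
  proof (rule sum.cong)
    fix e assume "e \<in> P"
    then have "{v\<in>X. v \<in> e} = e" "card e = 2" using assms(1) by auto
    then show "card {v\<in>X. v \<in> e} = 2" by simp
  qed simp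
  finally show ?thesis by simp
qed

lemma round:
  assumes g0: "\<forall>e\<in>E. g0 e \<in> e" "\<forall>v. outd E g0 v \<le> M" and M0: "0 < M"
  shows "\<exists>X P g'. X \<subseteq> V \<and> P \<subseteq> E \<and> simple_graph X P \<and> uniformly_dense 2 X P
     \<and> (\<forall>e\<in>E-P. g' e \<in> e) \<and> (\<forall>v. outd (E-P) g' v \<le> M div 2)"
proof -
  have "restrict g0 E \<in> H"
  proof -
    have "\<And>v. outd E (restrict g0 E) v = outd E g0 v" unfolding outd_def
      by (rule arg_cong[where f=card]) auto
    then show ?thesis using g0 unfolding H_def by (auto simp: restrict_PiE_iff)
  qed
  then have Hne: "Phi V E ` H \<noteq> {}" by auto
  have "Min (Phi V E ` H) \<in> Phi V E ` H" using Min_in[OF finite_imageI[OF finH] Hne] .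
  then obtain g where gH: "g \<in> H" and gmin: "Phi V E g = Min (Phi V E ` H)" by auto
  have opt: "\<forall>g'\<in>H. Phi V E g \<le> Phi V E g'"
    using gmin Min_le[OF finite_imageI[OF finH]] by auto
  have gfun: "\<forall>e\<in>E. g e \<in> e" using gH unfolding H_def by auto
  have gM: "\<forall>v. outd E g v \<le> M" using gH unfolding H_def by auto
  define k where "k = (M+1) div 2"
  have k1: "1 \<le> k" using M0 unfolding k_def by presburger
  have kM: "M - k = M div 2" "k - 1 \<le> M div 2" "k \<le> M"
    using M0 unfolding k_def by presburger+
  have outV: "outd E g v = 0" if "v \<notin> V" for v
  proof -
    have "{e\<in>E. g e = v} = {}" using gfun edges that by fastforce
    then show ?thesis unfolding outd_def by (metis card.empty)
  qed
  define A where "A = {v\<in>V. k \<le> outd E g v}"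
  define S where "S v = (SOME T. T \<subseteq> {e\<in>E. g e = v} \<and> card T = k)" for v
  have Sprop: "S v \<subseteq> {e\<in>E. g e = v} \<and> card (S v) = k" if "v \<in> A" for v
  proof -
    have "k \<le> card {e\<in>E. g e = v}" using that unfolding A_def outd_def by auto
    then obtain T where "T \<subseteq> {e\<in>E. g e = v}" "card T = k" by (rule obtain_subset_with_card_n)
    then show ?thesis unfolding S_def by (rule someI[where P="\<lambda>T. T \<subseteq> {e\<in>E. g e = v} \<and> card T = k", OF conjI])
  qed
  define Pout where "Pout v = (if v \<in> A then S v else {e\<in>E. g e = v})" for v
  have Pout_sub: "Pout v \<subseteq> {e\<in>E. g e = v}" for v using Sprop unfolding Pout_def by auto
  define Rel where "Rel = {(u,w). {u,w} \<in> Pout u \<and> u \<noteq> w}"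
  define X where "X = Rel\<^sup>* `` A"
  define P where "P = (\<Union>u\<in>X. Pout u)"
  have F1: "Rel \<subseteq> arcs E g" using Pout_sub unfolding Rel_def arcs_def by auto
  have F2: "w \<in> X" if "u \<in> X" "(u,w) \<in> Rel" for u w
    using that unfolding X_def by (meson Image_iff rtrancl.rtrancl_into_rtrancl)
  have F3: "A \<subseteq> X" unfolding X_def by auto
  have F4: "e \<subseteq> X" if "u \<in> X" "e \<in> Pout u" for u e
  proof -
    have eE: "e \<in> E" "g e = u" using that Pout_sub by auto
    then have "u \<in> e" using gfun by auto
    then obtain w where w: "e = {u,w}" "u \<noteq> w" using edge_other eE by blast
    then have "(u,w) \<in> Rel" unfolding Rel_def using that by auto
    then show ?thesis using F2 that w by auto
  qed
  have AV: "A \<subseteq> V" unfolding A_def by auto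
  have F5: "X \<subseteq> V"
  proof
    fix v assume "v \<in> X"
    then obtain a where a: "a \<in> A" "(a,v) \<in> Rel\<^sup>*" unfolding X_def by auto
    from a(2) show "v \<in> V"
    proof (cases rule: rtranclE)
      case base then show ?thesis using a AV by auto
    next
      case (step u)
      then have "{u,v} \<in> E" using Pout_sub unfolding Rel_def by auto
      then show ?thesis using edges by auto
    qed
  qed
  have F6: "P \<subseteq> E" unfolding P_def using Pout_sub by auto
  have F7: "{e\<in>P. g e = v} = Pout v" if "v \<in> X" for v
    using that Pout_sub unfolding P_def by auto
  have finP: "finite P" using F6 finE finite_subset by auto
  have finX: "finite X" using F5 finV finite_subset by auto
  have F8: "card (Pout v) \<le> k" if "v \<in> X" for v
  proof (cases "v \<in> A")
    case True then show ?thesis using Sprop unfolding Pout_def by auto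
  next
    case False
    then show ?thesis using that F5 unfolding Pout_def A_def outd_def by auto
  qed
  have F9: "k \<le> degree P v" if vX0: "v \<in> X" for v
  proof (cases "v \<in> A")
    case True
    have "Pout v \<subseteq> {e\<in>P. v \<in> e}" using F7[OF that] gfun F6 Pout_sub by fastforce
    moreover have "card (Pout v) = k" using Sprop True unfolding Pout_def by auto
    ultimately show ?thesis unfolding degree_def using finP
      by (metis (no_types, lifting) card_mono finite_subset mem_Collect_eq subsetI)
  next
    case False
    obtain a where a: "a \<in> A" "(a,v) \<in> Rel\<^sup>*" using vX0 unfolding X_def by auto
    from a(2) obtain u where u: "(a,u) \<in> Rel\<^sup>*" "(u,v) \<in> Rel"
    proof (cases rule: rtranclE)
      case base then show ?thesis using a False by auto
    qed auto
    have uX: "u \<in> X" using u a unfolding X_def by auto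
    have e1: "{u,v} \<in> Pout u" "u \<noteq> v" using u unfolding Rel_def by auto
    then have e1P: "{u,v} \<in> P" unfolding P_def using uX by auto
    have "g {u,v} = u" using e1 Pout_sub by auto
    then have e1n: "{u,v} \<notin> Pout v" using Pout_sub[of v] e1 by force
    have ins: "insert {u,v} (Pout v) \<subseteq> {e\<in>P. v \<in> e}" using F7[OF that] gfun F6 e1P Pout_sub by fastforce
    have c1: "card (insert {u,v} (Pout v)) \<le> card {e\<in>P. v \<in> e}"
      using ins finP by (intro card_mono) auto
    moreover have "card (insert {u,v} (Pout v)) = Suc (outd E g v)"
      using e1n False fin_out unfolding Pout_def outd_def by simp
    moreover have "k \<le> Suc (outd E g v)"
    proof (rule ccontr)
      assume "\<not> k \<le> Suc (outd E g v)"
      then have lo: "outd E g v + 2 \<le> k" by simp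
      have "(a,v) \<in> (arcs E g)\<^sup>*" using a(2) F1 rtrancl_mono by blast
      then obtain m where "(a,v) \<in> (arcs E g)^^m" using rtrancl_power by blast
      moreover have "k \<le> outd E g a" using a(1) unfolding A_def by auto
      ultimately show False using path_bound[OF gH opt] lo by blast
    qed
    ultimately show ?thesis unfolding degree_def by linarith
  qed
  have F10: "card (induced_edges P T) \<le> k * card T" if "T \<subseteq> X" for T
  proof -
    have finT: "finite T" using that finX finite_subset by auto
    have "induced_edges P T \<subseteq> (\<Union>v\<in>T. {e\<in>P. g e = v})"
      unfolding induced_edges_def using gfun F6 by auto
    then have "card (induced_edges P T) \<le> card (\<Union>v\<in>T. {e\<in>P. g e = v})"
      using finP finT by (intro card_mono) auto
    also have "\<dots> \<le> (\<Sum>v\<in>T. card {e\<in>P. g e = v})" by (rule card_UN_le[OF finT])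
    also have "\<dots> \<le> (\<Sum>v\<in>T. k)" using F7 F8 that by (intro sum_mono) auto
    finally show ?thesis by (simp add: mult.commute)
  qed
  have PX: "\<forall>e\<in>P. e \<subseteq> X \<and> card e = 2" using F4 F6 edges unfolding P_def by auto
  have HS: "(\<Sum>v\<in>X. degree P v) = 2 * card P" using handshake[OF PX finX finP] .
  have kX2P: "k * card X \<le> 2 * card P"
  proof -
    have "(\<Sum>v\<in>X. k) \<le> (\<Sum>v\<in>X. degree P v)" using F9 by (intro sum_mono) auto
    then have "card X * k \<le> 2 * card P" using HS by simp
    then show ?thesis by (metis mult.commute)
  qed
  have PkX: "card P \<le> k * card X"
  proof -
    have "induced_edges P X = P" unfolding induced_edges_def using PX by auto
    then show ?thesis using F10[of X] by simp
  qed
  have SG: "simple_graph X P" unfolding simple_graph_def using finX PX by auto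
  have UD: "uniformly_dense 2 X P"
    unfolding uniformly_dense_def avg_degree_def
  proof (intro conjI ballI allI impI)
    fix v assume vX: "v \<in> X"
    then have cX: "0 < card X" using finX card_gt_0_iff by auto
    have "real (card P) \<le> real (k * card X)" using PkX by (simp only: of_nat_le_iff)
    then have "real (card P) \<le> real k * real (card X)" by simp
    then have "real (card P) / real (card X) \<le> real k" using cX by (simp add: divide_le_eq)
    also have "\<dots> \<le> real (degree P v)" using F9[OF vX] by simp
    finally show "2 * real (card P) / real (card X) / 2 \<le> real (degree P v)" by simp
  next
    fix T assume T: "T \<subseteq> X \<and> T \<noteq> {}"
    have TX: "T \<subseteq> X" and Tne: "T \<noteq> {}" using T by auto
    have finT: "finite T" using finite_subset[OF TX finX] .
    have cX: "0 < card X" "0 < card T" using TX Tne finX finT by (auto simp: card_gt_0_iff)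
    have "real (card (induced_edges P T)) \<le> real (k * card T)"
      using F10[of T] T by (simp only: of_nat_le_iff)
    then have a1: "real (card (induced_edges P T)) \<le> real k * real (card T)" by simp
    have "real (k * card X) \<le> real (2 * card P)" using kX2P by (simp only: of_nat_le_iff)
    then have a2: "real k * real (card X) \<le> 2 * real (card P)" by simp
    have "2 * real (card (induced_edges P T)) / real (card T) \<le> 2 * real k"
      using a1 cX by (simp add: divide_le_eq)
    also have "\<dots> \<le> 2 * (2 * real (card P) / real (card X))"
      using a2 cX by (simp add: le_divide_eq)
    finally show "2 * real (card (induced_edges P T)) / real (card T) \<le> 2 * (2 * real (card P) / real (card X))" .
  qed
  have REM: "\<forall>v. outd (E-P) g v \<le> M div 2"
  proof
    fix v
    show "outd (E-P) g v \<le> M div 2"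
    proof (cases "v \<in> X")
      case True
      have "{e\<in>E-P. g e = v} = {e\<in>E. g e = v} - Pout v" using F7[OF True] by auto
      then have c: "outd (E-P) g v = outd E g v - card (Pout v)"
        unfolding outd_def using card_Diff_subset[OF finite_subset[OF Pout_sub fin_out] Pout_sub] by simp
      show ?thesis
      proof (cases "v \<in> A")
        case True
        then have "card (Pout v) = k" using Sprop unfolding Pout_def by auto
        then show ?thesis using c gM[rule_format, of v] kM by linarith
      next
        case False
        then show ?thesis using c unfolding Pout_def outd_def by simp
      qed
    next
      case False
      have "outd (E-P) g v \<le> outd E g v" unfolding outd_def using fin_out by (intro card_mono) auto
      moreover have "outd E g v < k"
        using False F3 outV k1 unfolding A_def by (cases "v \<in> V") auto
      ultimately show ?thesis using kM by linarith
    qed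
  qed
  show ?thesis using F5 F6 SG UD gfun REM by blast
qed

end


lemma decomp:
  assumes "finite V" "\<forall>e\<in>E. e \<subseteq> V \<and> card e = 2" "\<forall>e\<in>E. g e \<in> e" "\<forall>v. outd E g v \<le> M"
  shows "\<exists>l U F. (l = 0 \<or> 2^l \<le> 2*M) \<and> (\<forall>i<l. U i \<subseteq> V \<and> F i \<subseteq> E \<and> simple_graph (U i) (F i))
     \<and> (\<forall>i<l. \<forall>j<l. i \<noteq> j \<longrightarrow> F i \<inter> F j = {}) \<and> (\<Union>i<l. F i) = E
     \<and> (\<forall>i<l. uniformly_dense 2 (U i) (F i))"
using assms
proof (induction M arbitrary: E g rule: less_induct)
  case (less M)
  interpret gr V E M using less.prems(1,2) by unfold_locales auto
  show ?case
  proof (cases "M = 0")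
    case True
    have "E = {}"
    proof (rule ccontr)
      assume "E \<noteq> {}"
      then obtain e where e: "e \<in> E" by auto
      then have "e \<in> {e'\<in>E. g e' = g e}" by auto
      then have "outd E g (g e) > 0" unfolding outd_def using fin_out[of "\<lambda>e'. g e' = g e"]
        by (metis card_gt_0_iff empty_iff)
      then show False using less.prems(4) True by (metis not_le)
    qed
    then show ?thesis by (intro exI[of _ 0]) auto
  next
    case False
    then have M0: "0 < M" by simp
    obtain X P g' where XP: "X \<subseteq> V" "P \<subseteq> E" "simple_graph X P" "uniformly_dense 2 X P"
      "\<forall>e\<in>E-P. g' e \<in> e" "\<forall>v. outd (E-P) g' v \<le> M div 2"
      using round[OF less.prems(3,4) M0] by metis
    have lt: "M div 2 < M" using M0 by simp
    have e2: "\<forall>e\<in>E-P. e \<subseteq> V \<and> card e = 2" using less.prems(2) by auto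
    obtain l U F where IH: "(l = 0 \<or> 2^l \<le> 2*(M div 2))" "(\<forall>i<l. U i \<subseteq> V \<and> F i \<subseteq> E-P \<and> simple_graph (U i) (F i))"
      "(\<forall>i<l. \<forall>j<l. i \<noteq> j \<longrightarrow> F i \<inter> F j = {})" "(\<Union>i<l. F i) = E-P"
      "(\<forall>i<l. uniformly_dense 2 (U i) (F i))"
      using less.IH[OF lt less.prems(1) e2 XP(5,6)] by metis
    define U2 where "U2 = U(l := X)"
    define F2 where "F2 = F(l := P)"
    have b: "2^(Suc l) \<le> 2*M"
    proof (cases "l = 0")
      case True then show ?thesis using M0 by simp
    next
      case False
      then have "2^l \<le> 2*(M div 2)" using IH(1) by simp
      also have "\<dots> \<le> M" by simp
      finally show ?thesis by simp
    qed
    have c1: "\<forall>i<Suc l. U2 i \<subseteq> V \<and> F2 i \<subseteq> E \<and> simple_graph (U2 i) (F2 i)"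
      using IH(2) XP(1-3) unfolding U2_def F2_def by (auto simp: less_Suc_eq)
    have c2: "\<forall>i<Suc l. \<forall>j<Suc l. i \<noteq> j \<longrightarrow> F2 i \<inter> F2 j = {}"
    proof (intro allI impI)
      fix i j assume ij: "i < Suc l" "j < Suc l" "i \<noteq> j"
      show "F2 i \<inter> F2 j = {}"
      proof (cases "i = l")
        case True
        then have jl: "j < l" using ij by auto
        have "F j \<subseteq> E - P" using IH(2) jl by blast
        then show ?thesis using True jl unfolding F2_def by auto
      next
        case False
        then have il: "i < l" using ij by auto
        show ?thesis
        proof (cases "j = l")
          case True then show ?thesis using IH(2) il unfolding F2_def by auto
        next
          case False then show ?thesis using IH(3) il ij \<open>i \<noteq> l\<close> unfolding F2_def by auto
        qed
      qed
    qed
    have c3: "(\<Union>i<Suc l. F2 i) = E"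
    proof -
      have "(\<Union>i<Suc l. F2 i) = F2 l \<union> (\<Union>i<l. F2 i)" by (simp add: lessThan_Suc)
      also have "(\<Union>i<l. F2 i) = (\<Union>i<l. F i)" unfolding F2_def by auto
      finally show ?thesis using IH(4) XP(2) unfolding F2_def by auto
    qed
    have c4: "\<forall>i<Suc l. uniformly_dense 2 (U2 i) (F2 i)"
      using IH(5) XP(4) unfolding U2_def F2_def by (auto simp: less_Suc_eq)
    show ?thesis using b c1 c2 c3 c4 by metis
  qed
qed


lemma deg_le:
  assumes "finite V" "\<forall>e\<in>E. e \<subseteq> V \<and> card e = 2" "\<forall>e\<in>E. g e \<in> e"
  shows "outd E g v \<le> card V"
proof -
  interpret gr V E 0 using assms(1,2) by unfold_locales auto
  have "outd E g v \<le> card {e\<in>E. v \<in> e}" unfolding outd_def using assms(3) fin_out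
    by (intro card_mono) auto
  also have "card {e\<in>E. v \<in> e} = card ((\<lambda>e. e - {v}) ` {e\<in>E. v \<in> e})"
  proof (rule card_image[symmetric])
    show "inj_on (\<lambda>e. e - {v}) {e\<in>E. v \<in> e}"
    proof (rule inj_onI)
      fix x y assume "x \<in> {e\<in>E. v \<in> e}" "y \<in> {e\<in>E. v \<in> e}" "x - {v} = y - {v}"
      then show "x = y" by (metis (no_types, lifting) insert_Diff mem_Collect_eq)
    qed
  qed
  also have "\<dots> \<le> card ((\<lambda>w. {w}) ` V)"
  proof (rule card_mono)
    show "finite ((\<lambda>w. {w}) ` V)" using assms(1) by simp
    show "(\<lambda>e. e - {v}) ` {e\<in>E. v \<in> e} \<subseteq> (\<lambda>w. {w}) ` V"
    proof
      fix x assume "x \<in> (\<lambda>e. e - {v}) ` {e\<in>E. v \<in> e}"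
      then obtain e where e: "e \<in> E" "v \<in> e" "x = e - {v}" by auto
      then obtain w where w: "e = {v,w}" "v \<noteq> w" using edge_other by blast
      then have "x = {w}" "w \<in> V" using e assms(2) by auto
      then show "x \<in> (\<lambda>w. {w}) ` V" by auto
    qed
  qed
  also have "\<dots> \<le> card V" by (rule card_image_le[OF assms(1)])
  finally show ?thesis .
qed

theorem mainTheorem6:
  "\<exists>C::real. C > 0 \<and>
     (\<forall>(V::nat set) (E::nat set set). simple_graph V E \<and> card V \<ge> 2 \<longrightarrow>
        (\<exists>(l::nat) (U::nat \<Rightarrow> nat set) (F::nat \<Rightarrow> nat set set).
           (\<forall>i<l. U i \<subseteq> V \<and> F i \<subseteq> E \<and> simple_graph (U i) (F i)) \<and>
           (\<forall>i<l. \<forall>j<l. i \<noteq> j \<longrightarrow> F i \<inter> F j = {}) \<and>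
           (\<Union>i<l. F i) = E \<and>
           (\<forall>v\<in>V. real (card {i. i < l \<and> v \<in> U i}) \<le> C * ln (real (card V))) \<and>
           (\<forall>i<l. uniformly_dense 2 (U i) (F i))))"
proof (rule exI[of _ "2 / ln 2"], intro conjI allI impI)
  show "0 < 2 / ln (2::real)" by simp
  fix V :: "nat set" and E :: "nat set set"
  assume a: "simple_graph V E \<and> 2 \<le> card V"
  have finV: "finite V" and edges: "\<forall>e\<in>E. e \<subseteq> V \<and> card e = 2" using a unfolding simple_graph_def by auto
  define g where "g e = (SOME x. x \<in> e)" for e :: "nat set"
  have gfun: "\<forall>e\<in>E. g e \<in> e"
  proof
    fix e assume "e \<in> E"
    then have "e \<noteq> {}" using edges by fastforce
    then show "g e \<in> e" unfolding g_def by (meson ex_in_conv someI_ex)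
  qed
  have ob: "\<forall>v. outd E g v \<le> card V" using deg_le[OF finV edges gfun] by blast
  obtain l U F where D: "l = 0 \<or> 2^l \<le> 2 * card V" "\<forall>i<l. U i \<subseteq> V \<and> F i \<subseteq> E \<and> simple_graph (U i) (F i)"
     "\<forall>i<l. \<forall>j<l. i \<noteq> j \<longrightarrow> F i \<inter> F j = {}" "(\<Union>i<l. F i) = E"
     "\<forall>i<l. uniformly_dense 2 (U i) (F i)"
    using decomp[OF finV edges gfun ob] by metis
  define n where "n = card V"
  have n2: "2 \<le> n" using a n_def by simp
  have lnn: "0 < ln (real n)" using n2 by simp
  have lb: "real l \<le> 2 / ln 2 * ln (real n)"
  proof (cases "l = 0")
    case True then show ?thesis using lnn by simp
  next
    case False
    then have "2^l \<le> 2 * n" using D(1) n_def by simp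
    also have "2 * n \<le> n^2" using n2 by (simp add: power2_eq_square)
    finally have "(2::real)^l \<le> real n ^ 2" by (metis of_nat_le_iff of_nat_numeral of_nat_power)
    then have "ln ((2::real)^l) \<le> ln (real n ^ 2)" using n2 by (subst ln_le_cancel_iff) auto
    then have "real l * ln 2 \<le> 2 * ln (real n)" using n2 by (simp add: ln_realpow)
    then show ?thesis by (simp add: field_simps)
  qed
  have cnt: "\<forall>v\<in>V. real (card {i. i < l \<and> v \<in> U i}) \<le> 2 / ln 2 * ln (real (card V))"
  proof
    fix v assume "v \<in> V"
    have "card {i. i < l \<and> v \<in> U i} \<le> card {..<l}" by (intro card_mono) auto
    then have "real (card {i. i < l \<and> v \<in> U i}) \<le> real l" by simp
    then show "real (card {i. i < l \<and> v \<in> U i}) \<le> 2 / ln 2 * ln (real (card V))"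
      using lb unfolding n_def by linarith
  qed
  show "\<exists>(l::nat) (U::nat \<Rightarrow> nat set) (F::nat \<Rightarrow> nat set set). (\<forall>i<l. U i \<subseteq> V \<and> F i \<subseteq> E \<and> simple_graph (U i) (F i)) \<and>
           (\<forall>i<l. \<forall>j<l. i \<noteq> j \<longrightarrow> F i \<inter> F j = {}) \<and>
           (\<Union>i<l. F i) = E \<and>
           (\<forall>v\<in>V. real (card {i. i < l \<and> v \<in> U i}) \<le> 2 / ln 2 * ln (real (card V))) \<and>
           (\<forall>i<l. uniformly_dense 2 (U i) (F i))"
    apply (rule exI[where x=l], rule exI[where x=U], rule exI[where x=F])
    using D(2) D(3) D(4) cnt D(5) by (simp only:)
qed

end
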